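(* Let $A=\mathbb{Z}_2^n\times\mathbb{Z}_4\times A_{2'}$, where $n\ge 1$ and $A_{2'}$ is a finite abelian group of odd order. Then a subgroup $H$ of $A$ is a subgroup perfect code of $A$ if and only if $H$ is neither of the form $\{0\}^n\times\{0,2\}\times A'$ with $A'$ a proper subgroup of $A_{2'}$, nor of the form $\{0\}^n\times\{0\}\times A''$ with $A''$ a subgroup of $A_{2'}$.
   Context: Groups are written additively with identity $0$. An element $x\in A$ is a square if $x=2y$ for some $y\in A$; a subset is square-free if it contains no squares. For a square-free $T\subseteq A$, the Cayley sum graph $\mathrm{CayS}(A,T)$ is the simple graph with vertex set $A$ in which distinct $x,y$ are adjacent iff $x+y\in T$. A subset $C$ of the vertex set of a graph is a perfect code if every vertex is at distance at most one from exactly one vertex of $C$. A subgroup $H$ of $A$ is a subgroup perfect code of $A$ if $H$ is a perfect code of $\mathrm{CayS}(A,T)$ for some square-free $T\subseteq A$ (the empty set allowed). *)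

theory Defs
  imports "HOL-Analysis.Analysis" "HOL-Library.Numeral_Type"
begin

text \<open>Additive (abelian) groups are modelled by types of class ab_group_add;
  the whole type is the group.\<close>

definition add_subgroup :: "'a::ab_group_add set \<Rightarrow> bool" where
  "add_subgroup H \<longleftrightarrow> 0 \<in> H \<and> (\<forall>x\<in>H. \<forall>y\<in>H. x + y \<in> H) \<and> (\<forall>x\<in>H. - x \<in> H)"

definition is_square :: "'a::ab_group_add \<Rightarrow> bool" where
  "is_square x \<longleftrightarrow> (\<exists>y. x = y + y)"

abbreviation square_free :: "'a::ab_group_add set \<Rightarrow> bool" where
  "square_free T \<equiv> (\<forall>x\<in>T. \<not> is_square x)"

definition cays_adj :: "'a::ab_group_add set \<Rightarrow> 'a \<Rightarrow> 'a \<Rightarrow> bool" where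
  "cays_adj T x y \<longleftrightarrow> x \<noteq> y \<and> x + y \<in> T"

definition perfect_code :: "'v set \<Rightarrow> ('v \<Rightarrow> 'v \<Rightarrow> bool) \<Rightarrow> 'v set \<Rightarrow> bool" where
  "perfect_code V adj C \<longleftrightarrow> C \<subseteq> V \<and> (\<forall>v\<in>V. \<exists>!c. c \<in> C \<and> (v = c \<or> adj v c))"

definition subgroup_perfect_code :: "'a::ab_group_add set \<Rightarrow> bool" where
  "subgroup_perfect_code H \<longleftrightarrow> add_subgroup H \<and>
     (\<exists>T. square_free T \<and> perfect_code UNIV (cays_adj T) H)"

end

theory Submission
  imports Defs
begin

lemma d2: "(a::2) + a = 0"
proof -
  have "a + a = 2 * a" by simp
  also have "(2::2) = 0" by simp
  finally show ?thesis by simp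
qed

lemma d4: "(y::4) + y = 0 \<or> y + y = 2"
proof (cases y)
  case (of_int z)
  then have "z = 0 \<or> z = 1 \<or> z = 2 \<or> z = 3" by auto
  then show ?thesis using of_int by (auto simp: algebra_simps)
qed

lemma odd2: "of_nat (2*m+1) * (2::4) = 2"
proof -
  have "of_nat (2*m+1) * (2::4) = of_nat m * 4 + 2" by (simp add: algebra_simps)
  also have "(4::4) = 0" by simp
  finally show ?thesis by simp
qed

lemma sg_diff: "add_subgroup H \<Longrightarrow> x \<in> H \<Longrightarrow> y \<in> H \<Longrightarrow> x - y \<in> H"
  unfolding add_subgroup_def by (metis diff_conv_add_uminus)

lemma sg_rep: "add_subgroup H \<Longrightarrow> x \<in> H \<Longrightarrow> sum (\<lambda>_. x) {..<n::nat} \<in> H"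
  by (induction n) (auto simp: add_subgroup_def lessThan_Suc)

lemma rep_add: "sum (\<lambda>_. b) {..<m+(n::nat)} = sum (\<lambda>_. (b::'a::ab_group_add)) {..<m} + sum (\<lambda>_. b) {..<n}"
  by (induction n) (auto simp: lessThan_Suc algebra_simps)

lemma rep_card: "finite A \<Longrightarrow> sum (\<lambda>_. b) A = sum (\<lambda>_. (b::'a::ab_group_add)) {..<card A}"
  by (induction A rule: finite_induct) (auto simp: lessThan_Suc algebra_simps)

lemma sum_const_univ:
  fixes b :: "'b::{ab_group_add,finite}"
  shows "sum (\<lambda>_. b) (UNIV::'b set) = 0"
proof -
  have "sum (\<lambda>x. x + b) (UNIV::'b set) = sum (\<lambda>x. x) UNIV"
    by (rule sum.reindex_bij_witness[where i="\<lambda>x. x - b" and j="\<lambda>x. x + b"]) auto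
  then show ?thesis by (simp add: sum.distrib)
qed

lemma rep_card_zero: "sum (\<lambda>_. b) {..<CARD('b)} = (0::'b::{ab_group_add,finite})"
  using rep_card[of "UNIV::'b set" b] sum_const_univ[of b] by (metis finite)

lemma half:
  assumes "odd CARD('b)"
  shows "\<exists>y. (b::'b::{ab_group_add,finite}) = y + y"
proof -
  obtain m where m: "CARD('b) = 2*m+1" using assms oddE by blast
  let ?y = "sum (\<lambda>_. b) {..<Suc m}"
  have "?y + ?y = sum (\<lambda>_. b) {..<Suc m + Suc m}" by (simp add: rep_add)
  also have "Suc m + Suc m = Suc (CARD('b))" using m by simp
  also have "sum (\<lambda>_. b) {..<Suc (CARD('b))} = b"
    using rep_card_zero[of b] by (simp add: lessThan_Suc)
  finally show ?thesis by metis
qed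

lemma rep_prod: "sum (\<lambda>_. (a, c)) {..<n::nat} = (sum (\<lambda>_. a) {..<n}, sum (\<lambda>_. c) {..<n})"
  by (induction n) (auto simp: lessThan_Suc zero_prod_def)

lemma spc_iff:
  fixes H :: "'a::ab_group_add set"
  assumes sg: "add_subgroup H"
  shows "(\<exists>T. square_free T \<and> perfect_code UNIV (cays_adj T) H) \<longleftrightarrow>
         (\<forall>x. (\<forall>h\<in>H. is_square (x+h)) \<longrightarrow> x \<in> H)"
proof
  assume "\<exists>T. square_free T \<and> perfect_code UNIV (cays_adj T) H"
  then obtain T where sf: "square_free T" and pc: "perfect_code UNIV (cays_adj T) H" by blast
  show "\<forall>x. (\<forall>h\<in>H. is_square (x+h)) \<longrightarrow> x \<in> H"
  proof (intro allI impI)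
    fix x assume sq: "\<forall>h\<in>H. is_square (x+h)"
    show "x \<in> H"
    proof (rule ccontr)
      assume xn: "x \<notin> H"
      from pc obtain c where "c \<in> H" "x = c \<or> cays_adj T x c"
        unfolding perfect_code_def by blast
      then show False using xn sq sf unfolding cays_adj_def by blast
    qed
  qed
next
  assume cond: "\<forall>x. (\<forall>h\<in>H. is_square (x+h)) \<longrightarrow> x \<in> H"
  define P where "P x t \<longleftrightarrow> \<not> is_square t \<and> t - x \<in> H" for x t
  define r where "r x = (SOME t. P x t)" for x
  have ex: "\<exists>t. P x t" if "x \<notin> H" for x
  proof -
    from cond that obtain h where "h \<in> H" "\<not> is_square (x+h)" by blast
    then show ?thesis unfolding P_def by (intro exI[of _ "x+h"]) simp
  qed
  have Pr: "P x (r x)" if "x \<notin> H" for x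
    unfolding r_def using ex[OF that] by (rule someI_ex)
  have req: "r x = r y" if "x - y \<in> H" for x y
  proof -
    have "P x = P y"
    proof (intro ext)
      fix t
      have "t - y = (t - x) + (x - y)" "t - x = (t - y) - (x - y)" by simp_all
      then show "P x t = P y t" unfolding P_def using that sg
        by (metis add_subgroup_def sg_diff)
    qed
    then show ?thesis unfolding r_def by simp
  qed
  define T where "T = r ` (- H)"
  have sfT: "square_free T" unfolding T_def using Pr P_def by auto
  have THn: "t \<notin> H" if "t \<in> T" for t
  proof
    assume tH: "t \<in> H"
    from that obtain x where x: "x \<notin> H" "t = r x" unfolding T_def by auto
    have "r x - x \<in> H" using Pr[OF x(1)] P_def by simp
    then have "x \<in> H" using sg_diff[OF sg, of t "r x - x"] tH x by simp
    then show False using x by simp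
  qed
  have "perfect_code UNIV (cays_adj T) H"
    unfolding perfect_code_def
  proof (intro conjI ballI)
    fix v :: 'a
    show "\<exists>!c. c \<in> H \<and> (v = c \<or> cays_adj T v c)"
    proof (cases "v \<in> H")
      case True
      show ?thesis
      proof (rule ex1I[of _ v])
        show "v \<in> H \<and> (v = v \<or> cays_adj T v v)" using True by simp
        fix c assume c: "c \<in> H \<and> (v = c \<or> cays_adj T v c)"
        then have "v + c \<in> H" using True sg unfolding add_subgroup_def by blast
        then show "c = v" using c THn unfolding cays_adj_def by blast
      qed
    next
      case False
      have Pv: "P v (r v)" using Pr[OF False] .
      show ?thesis
      proof (rule ex1I[of _ "r v - v"])
        have "r v - v \<in> H" using Pv P_def by simp
        moreover have "v \<noteq> r v - v" using False calculation by auto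
        moreover have "r v \<in> T" unfolding T_def using False by auto
        ultimately show "r v - v \<in> H \<and> (v = r v - v \<or> cays_adj T v (r v - v))"
          unfolding cays_adj_def by simp
        fix c assume c: "c \<in> H \<and> (v = c \<or> cays_adj T v c)"
        then have "v + c \<in> T" using False unfolding cays_adj_def by auto
        then obtain x where x: "x \<notin> H" "v + c = r x" unfolding T_def by auto
        have "r x - x \<in> H" using Pr[OF x(1)] P_def by simp
        then have "(r x - x) - c \<in> H" using sg_diff[OF sg] c by blast
        moreover have "(r x - x) - c = v - x" using x(2) by (simp add: algebra_simps)
        ultimately have "r v = r x" using req by simp
        then show "c = r v - v" using x(2) by (simp add: algebra_simps)
      qed
    qed
  qed simp
  then show "\<exists>T. square_free T \<and> perfect_code UNIV (cays_adj T) H" using sfT by blast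
qed

lemma sq_iff:
  assumes "odd CARD('b)"
  shows "is_square ((v, z, b) :: (2, 'n::finite) vec \<times> 4 \<times> 'b::{ab_group_add, finite})
     \<longleftrightarrow> v = 0 \<and> (z = 0 \<or> z = 2)"
proof
  assume "is_square (v, z, b)"
  then obtain y where y: "(v, z, b) = y + y" unfolding is_square_def by blast
  obtain a c d where yy: "y = (a, c, d)" by (cases y) auto
  have "v = a + a" "z = c + c" using y yy by auto
  moreover have "a + a = 0" unfolding vec_eq_iff by (metis d2 vector_add_component zero_index)
  ultimately show "v = 0 \<and> (z = 0 \<or> z = 2)" using d4[of c] by simp
next
  assume h: "v = 0 \<and> (z = 0 \<or> z = 2)"
  obtain d where d: "b = d + d" using half[OF assms] by blast
  have "\<exists>w. z = w + w"
  proof (cases "z = 0")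
    case True then show ?thesis by (intro exI[of _ 0]) simp
  next
    case False then have "z = 2" using h by simp
    then show ?thesis by (intro exI[of _ 1]) simp
  qed
  then obtain w where w: "z = w + w" by blast
  have "(v, z, b) = (0, w, d) + (0, w, d)"
    using h d w by simp
  then show "is_square (v, z, b)" unfolding is_square_def by blast
qed

theorem proposition3p11:
  fixes H :: "((2, 'n::finite) vec \<times> 4 \<times> 'b::{ab_group_add, finite}) set"
  assumes "odd CARD('b)"
    and "add_subgroup H"
  shows "subgroup_perfect_code H \<longleftrightarrow>
    \<not> (\<exists>A'. add_subgroup A' \<and> A' \<noteq> (UNIV :: 'b set) \<and>
            H = {(v, z, b). v = 0 \<and> z \<in> {0, 2} \<and> b \<in> A'}) \<and>
    \<not> (\<exists>A''. add_subgroup (A'' :: 'b set) \<and>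
            H = {(v, z, b). v = 0 \<and> z = 0 \<and> b \<in> A''})"
proof -
  note sg = assms(2)
  define S :: "((2, 'n) vec \<times> 4 \<times> 'b) set" where "S = {(v, z, b). v = 0 \<and> z \<in> {0, 2}}"
  have sqS: "is_square p \<longleftrightarrow> p \<in> S" for p
    using sq_iff[OF assms(1)] unfolding S_def by (cases p) auto
  have S_add: "p \<in> S \<Longrightarrow> q \<in> S \<Longrightarrow> p + q \<in> S" for p q
  proof -
    assume "p \<in> S" "q \<in> S"
    then obtain y w where "p = y + y" "q = w + w" unfolding sqS[symmetric] is_square_def by blast
    then have "p + q = (y + w) + (y + w)" by (simp add: algebra_simps)
    then show "p + q \<in> S" unfolding sqS[symmetric] is_square_def by blast
  qed
  have S_neg: "p \<in> S \<Longrightarrow> - p \<in> S" for p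
    unfolding sqS[symmetric] is_square_def by (metis minus_add_distrib)
  have step1: "subgroup_perfect_code H \<longleftrightarrow> (\<forall>x. (\<forall>h\<in>H. x + h \<in> S) \<longrightarrow> x \<in> H)"
    unfolding subgroup_perfect_code_def using spc_iff[OF sg] sg sqS by simp
  have step2: "(\<forall>x. (\<forall>h\<in>H. x + h \<in> S) \<longrightarrow> x \<in> H) \<longleftrightarrow> \<not> (H \<subseteq> S \<and> H \<noteq> S)"
  proof
    assume L: "\<forall>x. (\<forall>h\<in>H. x + h \<in> S) \<longrightarrow> x \<in> H"
    show "\<not> (H \<subseteq> S \<and> H \<noteq> S)"
    proof
      assume a: "H \<subseteq> S \<and> H \<noteq> S"
      then obtain x where x: "x \<in> S" "x \<notin> H" by blast
      have "\<forall>h\<in>H. x + h \<in> S" using a x S_add by blast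
      then show False using L x by blast
    qed
  next
    assume R: "\<not> (H \<subseteq> S \<and> H \<noteq> S)"
    show "\<forall>x. (\<forall>h\<in>H. x + h \<in> S) \<longrightarrow> x \<in> H"
    proof (intro allI impI)
      fix x assume xh: "\<forall>h\<in>H. x + h \<in> S"
      have "0 \<in> H" using sg unfolding add_subgroup_def by blast
      then have xS: "x \<in> S" using xh by force
      have "H \<subseteq> S"
      proof
        fix h assume "h \<in> H"
        then have "x + h \<in> S" using xh by blast
        then have "- x + (x + h) \<in> S" using S_add S_neg xS by blast
        then show "h \<in> S" by simp
      qed
      then have "H = S" using R by blast
      then show "x \<in> H" using xS by simp
    qed
  qed
  have step3: "(H \<subseteq> S \<and> H \<noteq> S) \<longleftrightarrow>
    (\<exists>A'. add_subgroup A' \<and> A' \<noteq> (UNIV :: 'b set) \<and>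
            H = {(v, z, b). v = 0 \<and> z \<in> {0, 2} \<and> b \<in> A'}) \<or>
    (\<exists>A''. add_subgroup (A'' :: 'b set) \<and>
            H = {(v, z, b). v = 0 \<and> z = 0 \<and> b \<in> A''})"
  proof
    assume a: "H \<subseteq> S \<and> H \<noteq> S"
    define A where "A = {b. (0, 0, b) \<in> H}"
    have sgA: "add_subgroup A"
      unfolding add_subgroup_def
    proof (intro conjI ballI)
      show "0 \<in> A" using sg unfolding A_def add_subgroup_def by (simp add: zero_prod_def)
      fix x y assume "x \<in> A" "y \<in> A"
      then have "(0, 0, x) + (0, 0, y) \<in> H" using sg unfolding A_def add_subgroup_def by blast
      then show "x + y \<in> A" unfolding A_def by simp
    next
      fix x assume "x \<in> A"
      then have "- (0, 0, x) \<in> H" using sg unfolding A_def add_subgroup_def by blast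
      then show "- x \<in> A" unfolding A_def by simp
    qed
    show "(\<exists>A'. add_subgroup A' \<and> A' \<noteq> (UNIV :: 'b set) \<and>
            H = {(v, z, b). v = 0 \<and> z \<in> {0, 2} \<and> b \<in> A'}) \<or>
    (\<exists>A''. add_subgroup (A'' :: 'b set) \<and>
            H = {(v, z, b). v = 0 \<and> z = 0 \<and> b \<in> A''})"
    proof (cases "\<exists>b. (0, 2, b) \<in> H")
      case True
      then obtain b where b: "(0, 2, b) \<in> H" by blast
      obtain m where m: "CARD('b) = 2*m+1" using assms(1) oddE by blast
      have "sum (\<lambda>_. ((0::(2,'n) vec), (2::4), b)) {..<CARD('b)} \<in> H"
        using sg_rep[OF sg b] .
      moreover have "sum (\<lambda>_. ((0::(2,'n) vec), (2::4), b)) {..<CARD('b)} = (0, 2, 0)"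
        unfolding rep_prod rep_card_zero using odd2[of m] m by simp
      ultimately have h2: "(0, 2, 0) \<in> H" by simp
      have "H = {(v, z, b). v = 0 \<and> z \<in> {0, 2} \<and> b \<in> A}"
      proof (intro set_eqI iffI)
        fix p :: "(2,'n) vec \<times> 4 \<times> 'b" assume p: "p \<in> H"
        obtain v z c where pp: "p = (v, z, c)" by (cases p) auto
        have vz: "v = 0" "z = 0 \<or> z = 2" using p pp a unfolding S_def by auto
        have "c \<in> A"
        proof (cases "z = 0")
          case True then show ?thesis using p pp vz A_def by simp
        next
          case False
          then have "z = 2" using vz by simp
          then have c2: "((0::(2,'n) vec), (2::4), c) \<in> H" using p pp vz by simp
          have "((0::(2,'n) vec), (2::4), c) - (0, 2, 0) \<in> H" using sg_diff[OF sg c2 h2] .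
          then show ?thesis unfolding A_def by simp
        qed
        then show "p \<in> {(v, z, b). v = 0 \<and> z \<in> {0, 2} \<and> b \<in> A}" using pp vz by auto
      next
        fix p :: "(2,'n) vec \<times> 4 \<times> 'b" assume p: "p \<in> {(v, z, b). v = 0 \<and> z \<in> {0, 2} \<and> b \<in> A}"
        then obtain z c where pp: "p = (0, z, c)" "z = 0 \<or> z = 2" "(0, 0, c) \<in> H"
          unfolding A_def by auto
        have "(0, 2, 0) + (0, 0, c) \<in> H" using sg h2 pp unfolding add_subgroup_def by blast
        then show "p \<in> H" using pp by auto
      qed
      moreover have "A \<noteq> UNIV"
      proof
        assume "A = UNIV"
        then have "H = S" using calculation unfolding S_def by auto
        then show False using a by simp
      qed
      ultimately show ?thesis using sgA by blast
    next
      case False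
      have "H = {(v, z, b). v = 0 \<and> z = 0 \<and> b \<in> A}"
      proof (intro set_eqI iffI)
        fix p :: "(2,'n) vec \<times> 4 \<times> 'b" assume p: "p \<in> H"
        obtain v z c where pp: "p = (v, z, c)" by (cases p) auto
        have vz: "v = 0" "z = 0 \<or> z = 2" using p pp a unfolding S_def by auto
        then have "z = 0" using False p pp by auto
        then show "p \<in> {(v, z, b). v = 0 \<and> z = 0 \<and> b \<in> A}" using pp vz p A_def by auto
      next
        fix p :: "(2,'n) vec \<times> 4 \<times> 'b" assume "p \<in> {(v, z, b). v = 0 \<and> z = 0 \<and> b \<in> A}"
        then show "p \<in> H" unfolding A_def by auto
      qed
      then show ?thesis using sgA by blast
    qed
  next
    assume "(\<exists>A'. add_subgroup A' \<and> A' \<noteq> (UNIV :: 'b set) \<and>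
            H = {(v, z, b). v = 0 \<and> z \<in> {0, 2} \<and> b \<in> A'}) \<or>
    (\<exists>A''. add_subgroup (A'' :: 'b set) \<and>
            H = {(v, z, b). v = 0 \<and> z = 0 \<and> b \<in> A''})"
    then show "H \<subseteq> S \<and> H \<noteq> S"
    proof
      assume "\<exists>A'. add_subgroup A' \<and> A' \<noteq> (UNIV :: 'b set) \<and>
            H = {(v, z, b). v = 0 \<and> z \<in> {0, 2} \<and> b \<in> A'}"
      then obtain A' where A': "A' \<noteq> (UNIV :: 'b set)"
            "H = {(v, z, b). v = 0 \<and> z \<in> {0, 2} \<and> b \<in> A'}" by blast
      then obtain c where "c \<notin> A'" by blast
      then have c: "((0::(2,'n) vec), (0::4), c) \<in> S - H" using A' unfolding S_def by simp
      have "H \<subseteq> S" using A'(2) unfolding S_def by auto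
      moreover have "H \<noteq> S" using c by blast
      ultimately show ?thesis by blast
    next
      assume "\<exists>A''. add_subgroup (A'' :: 'b set) \<and>
            H = {(v, z, b). v = 0 \<and> z = 0 \<and> b \<in> A''}"
      then obtain A'' where A'': "H = {(v, z, b). v = 0 \<and> z = 0 \<and> b \<in> (A'' :: 'b set)}" by blast
      have c: "((0::(2,'n) vec), (2::4), (0::'b)) \<in> S - H" using A'' unfolding S_def by simp
      have "H \<subseteq> S" using A'' unfolding S_def by auto
      moreover have "H \<noteq> S" using c by blast
      ultimately show ?thesis by blast
    qed
  qed
  show ?thesis unfolding step1 step2 step3 by (simp only: de_Morgan_disj not_not)
qed

end
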